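(* For every positive integer $n$, with $P^r_n=\sum_{b\in Z_n^r}\prod_{s=1}^rC_{b_s}$, $$\sum_{\substack{1\le r\le n\\ r\text{ odd}}}P^r_n=nC_{n-1}\qquad\text{and}\qquad\sum_{\substack{1\le r\le n\\ r\text{ even}}}P^r_n=(n-1)C_{n-1}.$$
   Context: $C_m=\frac{1}{m+1}\binom{2m}{m}$ is the $m$-th Catalan number ($C_0=1$) and $Z_n^r=\{(b_1,\dots,b_r)\in\mathbb Z^r: b_s>0\text{ for all }s,\ \sum_{s=1}^rb_s=n\}$. *)

theory Defs
  imports Main
begin

definition catalan :: "nat \<Rightarrow> nat" where
  "catalan m = ((2*m) choose m) div (m + 1)"

definition compositions :: "nat \<Rightarrow> nat \<Rightarrow> int list set" where
  "compositions n r = {b. length b = r \<and> (\<forall>s<r. b ! s > 0) \<and> sum_list b = int n}"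

definition P :: "nat \<Rightarrow> nat \<Rightarrow> nat" where
  "P r n = (\<Sum>b\<in>compositions n r. \<Prod>s<r. catalan (nat (b ! s)))"

end

theory Submission imports Defs "HOL-Computational_Algebra.Formal_Power_Series" begin

lemma comp0: "compositions n 0 = (if n = 0 then {[]} else {})"
  by (auto simp: compositions_def)

lemma sum_list_pos_nonneg: "(\<forall>s<length t. (t::int list) ! s > 0) \<Longrightarrow> sum_list t \<ge> 0"
  by (rule sum_list_nonneg) (auto simp: in_set_conv_nth intro: less_imp_le)

lemma compSuc: "compositions n (Suc r) = (\<Union>k\<in>{1..n}. (\<lambda>b. int k # b) ` compositions (n-k) r)"
proof
  show "compositions n (Suc r) \<subseteq> (\<Union>k\<in>{1..n}. (\<lambda>b. int k # b) ` compositions (n-k) r)"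
  proof
    fix b assume b: "b \<in> compositions n (Suc r)"
    then obtain x t where bt: "b = x # t" unfolding compositions_def by (cases b) auto
    have lt: "length t = r" using b bt by (auto simp: compositions_def)
    have x: "x > 0" using b bt by (auto simp: compositions_def)
    have tp: "\<forall>s<r. t ! s > 0"
    proof (intro allI impI)
      fix s assume "s < r"
      hence "b ! Suc s > 0" using b by (auto simp: compositions_def)
      thus "t ! s > 0" using bt by simp
    qed
    have st: "x + sum_list t = int n" using b bt by (auto simp: compositions_def)
    have "sum_list t \<ge> 0" using sum_list_pos_nonneg[of t] tp lt by auto
    define k where "k = nat x"
    have k: "1 \<le> k" "k \<le> n" "int k = x" using x st \<open>sum_list t \<ge> 0\<close> by (auto simp: k_def)
    have "t \<in> compositions (n-k) r" using lt tp st k by (auto simp: compositions_def of_nat_diff)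
    thus "b \<in> (\<Union>k\<in>{1..n}. (\<lambda>b. int k # b) ` compositions (n-k) r)"
      using k bt by auto
  qed
next
  show "(\<Union>k\<in>{1..n}. (\<lambda>b. int k # b) ` compositions (n-k) r) \<subseteq> compositions n (Suc r)"
  proof (clarify)
    fix k t assume k: "k \<in> {1..n}" and t: "t \<in> compositions (n-k) r"
    show "int k # t \<in> compositions n (Suc r)"
      unfolding compositions_def
    proof (intro CollectI conjI allI impI)
      show "length (int k # t) = Suc r" using t by (simp add: compositions_def)
      show "sum_list (int k # t) = int n" using t k by (auto simp: compositions_def of_nat_diff)
      fix s assume "s < Suc r"
      thus "(int k # t) ! s > 0" using t k by (cases s) (auto simp: compositions_def)
    qed
  qed
qed

lemma comp_finite: "finite (compositions n r)"
proof (induction r arbitrary: n)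
  case 0 thus ?case by (simp add: comp0)
next
  case (Suc r) thus ?case by (simp add: compSuc)
qed

lemma P0: "P 0 n = (if n = 0 then 1 else 0)"
  by (simp add: P_def comp0)

lemma PSuc: "P (Suc r) n = (\<Sum>k\<in>{1..n}. catalan k * P r (n-k))"
proof -
  have "P (Suc r) n = (\<Sum>k\<in>{1..n}. \<Sum>b\<in>(\<lambda>b. int k # b) ` compositions (n-k) r. \<Prod>s<Suc r. catalan (nat (b ! s)))"
    unfolding P_def compSuc
    by (rule sum.UNION_disjoint) (auto simp: comp_finite)
  also have "\<dots> = (\<Sum>k\<in>{1..n}. catalan k * P r (n-k))"
  proof (rule sum.cong[OF refl])
    fix k assume k: "k \<in> {1..n}"
    have "(\<Sum>b\<in>(\<lambda>b. int k # b) ` compositions (n-k) r. \<Prod>s<Suc r. catalan (nat (b ! s)))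
        = (\<Sum>b\<in>compositions (n-k) r. \<Prod>s<Suc r. catalan (nat ((int k # b) ! s)))"
      by (subst sum.reindex) (auto simp: inj_on_def)
    also have "\<dots> = (\<Sum>b\<in>compositions (n-k) r. catalan k * (\<Prod>s<r. catalan (nat (b ! s))))"
      by (simp add: prod.lessThan_Suc_shift del: prod.lessThan_Suc)
    also have "\<dots> = catalan k * P r (n-k)" by (simp add: P_def sum_distrib_left)
    finally show "(\<Sum>b\<in>(\<lambda>b. int k # b) ` compositions (n-k) r. \<Prod>s<Suc r. catalan (nat (b ! s))) = catalan k * P r (n-k)" .
  qed
  finally show ?thesis .
qed
lemma cat_dvd: "Suc n dvd ((2*n) choose n)"
proof -
  have "Suc (2*n) * ((2*n) choose n) = (Suc (2*n) choose Suc n) * Suc n" by (rule Suc_times_binomial_eq)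
  hence e: "n * ((2*n) choose n) = Suc n * ((2*n) choose Suc n)" by (simp add: algebra_simps)
  hence "(2*n) choose n = Suc n * (((2*n) choose n) - ((2*n) choose Suc n))"
    by (simp add: algebra_simps diff_mult_distrib2)
  thus ?thesis by (metis dvd_triv_left)
qed

lemma cat_real: "real (catalan n) = real ((2*n) choose n) / real (Suc n)"
  using cat_dvd[of n] by (simp add: catalan_def real_of_nat_div)

lemma cat_rec: "real (Suc (Suc n)) * real (catalan (Suc n)) = real (2*(2*n+1)) * real (catalan n)"
proof -
  have e1: "Suc n * (Suc (Suc (2*n)) choose Suc n) = Suc (Suc (2*n)) * (Suc (2*n) choose n)"
    by (rule Suc_times_binomial)
  have sym: "Suc (2*n) choose n = Suc (2*n) choose Suc n"
    using binomial_symmetric[of n "Suc (2*n)"] by simp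
  have e2: "Suc n * (Suc (2*n) choose Suc n) = Suc (2*n) * ((2*n) choose n)"
    by (rule Suc_times_binomial)
  define B where "B = real ((2*n) choose n)"
  define B' where "B' = real ((2*Suc n) choose Suc n)"
  define X where "X = real (Suc (2*n) choose n)"
  have t: "2 * Suc n = Suc (Suc (2*n))" by simp
  have "real (Suc n) * B' = real (Suc (Suc (2*n))) * X"
    unfolding B'_def X_def t using arg_cong[OF e1, of real] by (simp only: of_nat_mult)
  also have "real (Suc (Suc (2*n))) = real (Suc n) * 2" by simp
  finally have "real (Suc n) * B' = real (Suc n) * (2 * X)" by simp
  hence k1: "B' = 2 * X" by (metis mult_left_cancel of_nat_eq_0_iff nat.distinct(1))
  have k2: "real (Suc n) * X = real (Suc (2*n)) * B"
    unfolding X_def B_def sym using arg_cong[OF e2, of real] by (simp only: of_nat_mult)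
  have k: "real (Suc n) * B' = 2 * real (Suc (2*n)) * B" using k1 k2 by (simp add: algebra_simps)
  have "real (Suc (Suc n)) * real (catalan (Suc n)) = B'"
    unfolding cat_real B'_def by simp
  also have "\<dots> = real (2*(2*n+1)) * real (catalan n)"
    unfolding cat_real B_def[symmetric] using k
    by (simp add: field_simps)
  finally show ?thesis .
qed

definition cG :: "real fps" where "cG = Abs_fps (\<lambda>n. real (catalan n))"
definition cH :: "real fps" where "cH = fps_X * cG"

lemma cat0: "catalan 0 = 1" by (simp add: catalan_def)

lemma cH_nth: "fps_nth cH n = (if n = 0 then 0 else real (catalan (n - 1)))"
  by (simp add: cH_def cG_def)

lemma step1: "fps_deriv cH * (1 - 4 * fps_X) = 1 - 2 * cH"
proof (rule fps_ext)
  fix n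
  have e: "fps_deriv cH * (1 - 4 * fps_X) = fps_deriv cH - fps_const 4 * (fps_X * fps_deriv cH)"
    by (simp add: algebra_simps numeral_fps_const)
  have e2: "(1 - 2 * cH :: real fps) = 1 - fps_const 2 * cH" by (simp add: numeral_fps_const)
  show "fps_nth (fps_deriv cH * (1 - 4 * fps_X)) n = fps_nth (1 - 2 * cH) n"
  proof (cases n)
    case 0 thus ?thesis unfolding e e2 by (simp add: cH_nth cat0)
  next
    case (Suc m)
    have "real (Suc (Suc m)) * real (catalan (Suc m)) = real (2*(2*m+1)) * real (catalan m)" by (rule cat_rec)
    thus ?thesis unfolding e e2 using Suc by (simp add: cH_nth algebra_simps)
  qed
qed

lemma cH0: "fps_nth cH 0 = 0" by (simp add: cH_nth)

lemma step2: "cH^2 = cH - fps_X"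
proof -
  define W where "W = (1 - 2 * cH)^2 - (1 - 4 * fps_X)"
  have dW: "fps_deriv W * (1 - 4 * fps_X) = - 4 * W"
  proof -
    have hW: "fps_deriv W = - 4 * (1 - 2 * cH) * fps_deriv cH + 4"
      unfolding W_def by (simp add: power2_eq_square algebra_simps)
    have "fps_deriv W * (1 - 4 * fps_X) = - 4 * (1 - 2 * cH) * (fps_deriv cH * (1 - 4 * fps_X)) + 4 * (1 - 4 * fps_X)"
      unfolding hW by (simp add: algebra_simps)
    also have "\<dots> = -4 * W" unfolding step1 W_def by (simp add: algebra_simps power2_eq_square)
    finally show ?thesis .
  qed
  have "\<forall>n. fps_nth W n = 0"
  proof
    fix n show "fps_nth W n = 0"
    proof (induction n)
      case 0 thus ?case by (simp add: W_def power2_eq_square cH0)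
    next
      case (Suc m)
      have e1: "fps_deriv W * (1 - 4 * fps_X) = fps_deriv W - fps_const 4 * (fps_X * fps_deriv W)"
        by (simp add: algebra_simps numeral_fps_const)
      have e2: "(- 4 * W) = fps_const (- 4) * W" by (simp add: numeral_fps_const)
      have l: "fps_nth (fps_deriv W * (1 - 4 * fps_X)) m = (of_nat m + 1) * fps_nth W (Suc m) - 4 * (if m = 0 then 0 else of_nat m * fps_nth W m)"
        unfolding e1 by (cases m) (simp_all add: fps_deriv_nth)
      have r: "fps_nth (- 4 * W) m = -4 * fps_nth W m" unfolding e2 by simp
      have "(of_nat m + 1) * fps_nth W (Suc m) - 4 * (if m = 0 then 0 else of_nat m * fps_nth W m) = -4 * fps_nth W m"
        using dW l r by metis
      hence "(of_nat m + 1) * fps_nth W (Suc m) = 0" using Suc.IH by (simp split: if_splits)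
      moreover have "(of_nat m + 1::real) \<noteq> 0" by (simp add: add_nonneg_eq_0_iff)
      ultimately show ?case by simp
    qed
  qed
  hence "W = 0" by (simp add: fps_ext)
  hence "4 * (cH^2 - cH + fps_X) = 0" unfolding W_def by (simp add: algebra_simps power2_eq_square)
  hence "cH^2 - cH + fps_X = 0" by (metis mult_eq_0_iff numeral_neq_fps_zero)
  thus ?thesis by (simp add: algebra_simps)
qed

definition cD :: "real fps" where "cD = cG - 1"

lemma Xcancel: "fps_X * (a::real fps) = fps_X * b \<Longrightarrow> a = b"
  by (simp add: fps_X_neq_zero)

lemma cD_eq: "cD = fps_X * cG^2"
proof (rule Xcancel)
  show "fps_X * cD = fps_X * (fps_X * cG^2)"
    using step2 unfolding cD_def cH_def by algebra
qed

lemma cD_nth: "fps_nth cD i = (if i = 0 then 0 else real (catalan i))"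
  by (simp add: cD_def cG_def cat0)

lemma cD_pow: "fps_nth (cD^r) n = real (P r n)"
proof (induction r arbitrary: n)
  case 0 thus ?case by (simp add: P0)
next
  case (Suc r)
  have "fps_nth (cD^Suc r) n = (\<Sum>i=0..n. fps_nth cD i * fps_nth (cD^r) (n - i))"
    by (simp add: fps_mult_nth)
  also have "\<dots> = (\<Sum>i=1..n. real (catalan i) * real (P r (n - i)))"
    by (simp add: sum.atLeast_Suc_atMost cD_nth Suc.IH)
  also have "\<dots> = real (P (Suc r) n)" by (simp add: PSuc)
  finally show ?case .
qed

lemma dH: "fps_deriv cH * (1 - 2 * cH) = 1"
proof -
  have "fps_deriv (cH * cH) = fps_deriv (cH - fps_X)" using step2 by (simp add: power2_eq_square)
  hence "2 * cH * fps_deriv cH = fps_deriv cH - 1" by (simp add: algebra_simps mult_2)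
  thus ?thesis by (simp add: algebra_simps)
qed

lemma inv1: "(1 + cD) * (1 - cH) = 1"
proof (rule Xcancel)
  show "fps_X * ((1 + cD) * (1 - cH)) = fps_X * 1"
    using step2 unfolding cD_def cH_def by algebra
qed

definition cF :: "real fps" where "cF = 1 + 2 * fps_X * fps_deriv cH - cH"

lemma inv2: "(1 - cD) * cF = 1"
proof (rule Xcancel)
  have a: "cH^2 = cH - fps_X" by (rule step2)
  have b: "fps_deriv cH * (1 - 2 * cH) = 1" by (rule dH)
  have c: "cH = fps_X * cG" by (simp add: cH_def)
  show "fps_X * ((1 - cD) * cF) = fps_X * 1"
    using a b c unfolding cD_def cF_def by algebra
qed

lemma cF_nth: "n \<ge> 1 \<Longrightarrow> fps_nth cF n = (2 * real n - 1) * real (catalan (n - 1))"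
  by (cases n) (auto simp: cF_def numeral_fps_const fps_deriv_nth cH_nth algebra_simps)


lemma geo:
  fixes A E Y :: "real fps"
  assumes inv: "A * (1 - E) = 1" and E: "E = fps_X * Y"
  shows "fps_nth (\<Sum>r\<le>n. E^r) n = fps_nth A n"
proof -
  define S where "S = (\<Sum>r\<le>n. E^r)"
  have s: "(1 - E) * S = 1 - E^Suc n"
    unfolding S_def using one_diff_power_eq[of E "Suc n"] by (simp add: lessThan_Suc_atMost)
  have "A * ((1 - E) * S) = S" using inv by (metis mult.assoc mult_1)
  hence "S - A = A * ((1 - E) * S) - A" by simp
  also have "\<dots> = - (fps_X^Suc n * (A * Y^Suc n))" unfolding s unfolding E
    by (simp add: algebra_simps power_mult_distrib)
  finally have "fps_nth (S - A) n = fps_nth (- (fps_X^Suc n * (A * Y^Suc n))) n" by simp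
  also have "\<dots> = 0"
  proof -
    have z: "fps_nth (fps_X^Suc n * (A * Y^Suc n)) n = 0"
      by (rule trans[OF fps_X_power_mult_nth]) simp
    show ?thesis by (simp only: fps_neg_nth z neg_0_equal_iff_equal)
  qed
  finally show ?thesis unfolding S_def by simp
qed

lemma allsum: "n \<ge> 1 \<Longrightarrow> (\<Sum>r\<le>n. real (P r n)) = (2 * real n - 1) * real (catalan (n - 1))"
proof -
  assume n: "n \<ge> 1"
  have "fps_nth (\<Sum>r\<le>n. cD^r) n = fps_nth cF n"
    by (rule geo[where Y = "cG^2"]) (use inv2 cD_eq in \<open>simp_all add: mult.commute\<close>)
  thus ?thesis using n by (simp add: fps_sum_nth cD_pow cF_nth)
qed

lemma altsum: "n \<ge> 1 \<Longrightarrow> (\<Sum>r\<le>n. (-1)^r * real (P r n)) = - real (catalan (n - 1))"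
proof -
  assume n: "n \<ge> 1"
  have "fps_nth (\<Sum>r\<le>n. (-cD)^r) n = fps_nth (1 - cH) n"
    by (rule geo[where Y = "uminus (cG^2)"]) (use inv1 cD_eq in \<open>simp_all add: mult.commute\<close>)
  moreover have "fps_nth ((-cD)^r) n = (-1)^r * fps_nth (cD^r) n" for r
    by (cases "even r") simp_all
  ultimately show ?thesis using n by (simp add: fps_sum_nth cD_pow cH_nth)
qed


theorem lemma5p10:
  fixes n :: nat
  assumes "n \<ge> 1"
  shows "(\<Sum>r\<in>{r. 1 \<le> r \<and> r \<le> n \<and> odd r}. P r n) = n * catalan (n - 1)
       \<and> (\<Sum>r\<in>{r. 1 \<le> r \<and> r \<le> n \<and> even r}. P r n) = (n - 1) * catalan (n - 1)"
proof -
  define Od where "Od = {r. 1 \<le> r \<and> r \<le> n \<and> odd r}"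
  define Ev where "Ev = {r. 1 \<le> r \<and> r \<le> n \<and> even r}"
  have fO: "finite Od" unfolding Od_def by (rule finite_subset[of _ "{..n}"]) auto
  have fE: "finite Ev" unfolding Ev_def by (rule finite_subset[of _ "{..n}"]) auto
  have split: "{..n} = insert 0 (Od \<union> Ev)" "0 \<notin> Od \<union> Ev" "Od \<inter> Ev = {}"
    unfolding Od_def Ev_def by auto
  have p0: "P 0 n = 0" using assms by (simp add: P0)
  have gen: "(\<Sum>r\<le>n. f r) = f 0 + sum f Od + sum f Ev" for f :: "nat \<Rightarrow> real"
    unfolding split(1) using fO fE split by (simp add: sum.union_disjoint)
  define o' where "o' = (\<Sum>r\<in>Od. real (P r n))"
  define e' where "e' = (\<Sum>r\<in>Ev. real (P r n))"
  have h1: "o' + e' = (2 * real n - 1) * real (catalan (n - 1))"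
    using allsum[OF assms] gen[of "\<lambda>r. real (P r n)"] p0 by (simp add: o'_def e'_def)
  have so: "(\<Sum>r\<in>Od. (-1)^r * real (P r n)) = - o'"
    unfolding o'_def sum_negf[symmetric] by (rule sum.cong) (auto simp: Od_def)
  have se: "(\<Sum>r\<in>Ev. (-1)^r * real (P r n)) = e'"
    unfolding e'_def by (rule sum.cong) (auto simp: Ev_def)
  have h2: "- o' + e' = - real (catalan (n - 1))"
    using altsum[OF assms] gen[of "\<lambda>r. (-1)^r * real (P r n)"] p0 so se by simp
  have "o' = real n * real (catalan (n - 1))" using h1 h2 by (simp add: algebra_simps)
  hence A: "real (\<Sum>r\<in>Od. P r n) = real (n * catalan (n - 1))" by (simp add: o'_def)
  have "e' = (real n - 1) * real (catalan (n - 1))" using h1 h2 by (simp add: algebra_simps)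
  hence B: "real (\<Sum>r\<in>Ev. P r n) = real ((n - 1) * catalan (n - 1))" using assms by (simp add: e'_def of_nat_diff)
  show ?thesis using A B unfolding Od_def Ev_def of_nat_eq_iff by simp
qed
end
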